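(* Let $k$ be an algebraically closed field, $\beta$ a basis set of $n$ monomials in $k[x_1,\dots,x_r]$, $R$ the coordinate ring of $U_\beta$ and $M\subseteq R$ the maximal ideal of the point $t_\beta$. Let $S$ be a finite set of $d$ arrows $c^{\mathbf d}_{\mathbf j}$ for $\beta$. Then the $k$-span of (the images of) $S$ in $M/M^2$ has dimension $d$ if and only if both of the following hold: (a) $c^{\mathbf d}_{\mathbf j}\not\sim 0$ for every $c^{\mathbf d}_{\mathbf j}\in S$; (b) $c^{\mathbf d_1}_{\mathbf j_1}\not\sim c^{\mathbf d_2}_{\mathbf j_2}$ for all distinct $c^{\mathbf d_1}_{\mathbf j_1}\neq c^{\mathbf d_2}_{\mathbf j_2}$ in $S$.
   Context: Monomials $\mathbf x^{\mathbf d}=x_1^{d_1}\cdots x_r^{d_r}$ are identified with exponent vectors $\mathbf d\in\mathbb Z_{\ge0}^r$. A basis set is a finite nonempty set $\beta$ of monomials such that $m_1\in\beta$, $m_2\mid m_1$ implies $m_2\in\beta$; $I_\beta$ is the ideal generated by all monomials not in $\beta$ (colength $n=|\beta|$). $\mathbf H^n$ is the Hilbert scheme of $n$ points of $\mathbb A^r_k$, $t_\beta$ the point corresponding to $I_\beta$, and $U_\beta\subseteq\mathbf H^n$ the open affine subscheme of points $t$ for which $\beta$ is a $k$-basis of $k[\mathbf x]/I_t$, with coordinate ring $R$. For $\mathbf x^{\mathbf d}\notin\beta$, $\mathbf x^{\mathbf j}\in\beta$, $c^{\mathbf d}_{\mathbf j}\in R$ is the function with $\mathbf x^{\mathbf d}-\sum_{\mathbf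 j\in\beta}c^{\mathbf d}_{\mathbf j}(t)\mathbf x^{\mathbf j}\in I_t$ for all $t\in U_\beta$; $M$ is the maximal ideal of $t_\beta$ (generated by these functions). An arrow is such a pair $(\mathbf d,\mathbf j)$ (tail $\mathbf x^{\mathbf d}\notin\beta$, head $\mathbf x^{\mathbf j}\in\beta$), denoted and identified with $c^{\mathbf d}_{\mathbf j}$. A translation step replaces $(\mathbf d,\mathbf j)$ by $(\mathbf d\pm e_i,\mathbf j\pm e_i)$ for some $i$, provided the result is again an arrow (nonnegative exponents, head in $\beta$, tail not in $\beta$); two arrows are translation-equivalent ($\sim$) if one is reachable from the other by finitely many steps. We write $c\sim0$ if $c$ is translation-equivalent to an arrow $(\mathbf d',\mathbf j')$ such that for some $i$: $j'_i=0$, $d'_i\ge1$ and $\mathbf x^{\mathbf d'-e_i}\notin\beta$ (i.e. one more step in the decreasing $x_i$-direction would move the head out of the first orthant while the tail stays outside $\beta$). *)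

theory Defs
  imports "HOL-Library.Poly_Mapping" "HOL-Computational_Algebra.Polynomial"
begin

text \<open>Exponent vectors of monomials in k[x_1..x_r] are functions nat => nat vanishing
  outside the indices 0..r-1 (index i stands for the variable x_(i+1)).\<close>

type_synonym expv = "nat \<Rightarrow> nat"

definition monoms :: "nat \<Rightarrow> expv set" where
  "monoms r = {d. \<forall>i\<ge>r. d i = 0}"

definition unitv :: "nat \<Rightarrow> expv" where
  "unitv i = (\<lambda>l. if l = i then 1 else 0)"

definition vadd :: "expv \<Rightarrow> expv \<Rightarrow> expv" where
  "vadd a b = (\<lambda>l. a l + b l)"

definition vsub :: "expv \<Rightarrow> expv \<Rightarrow> expv" where
  "vsub a b = (\<lambda>l. a l - b l)"

definition mdvd :: "expv \<Rightarrow> expv \<Rightarrow> bool" where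
  "mdvd a b \<longleftrightarrow> (\<forall>i. a i \<le> b i)"

definition basis_set :: "nat \<Rightarrow> expv set \<Rightarrow> bool" where
  "basis_set r \<beta> \<longleftrightarrow> finite \<beta> \<and> \<beta> \<noteq> {} \<and> \<beta> \<subseteq> monoms r \<and>
     (\<forall>m1\<in>\<beta>. \<forall>m2\<in>monoms r. mdvd m2 m1 \<longrightarrow> m2 \<in> \<beta>)"

text \<open>An arrow (d, j): tail x^d outside beta, head x^j in beta.\<close>
definition arrows :: "nat \<Rightarrow> expv set \<Rightarrow> (expv \<times> expv) set" where
  "arrows r \<beta> = {(d, j). d \<in> monoms r \<and> d \<notin> \<beta> \<and> j \<in> \<beta>}"

definition tstep :: "nat \<Rightarrow> expv set \<Rightarrow> expv \<times> expv \<Rightarrow> expv \<times> expv \<Rightarrow> bool" where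
  "tstep r \<beta> a b \<longleftrightarrow> a \<in> arrows r \<beta> \<and> b \<in> arrows r \<beta> \<and>
     (\<exists>i<r. b = (vadd (fst a) (unitv i), vadd (snd a) (unitv i)) \<or> a = (vadd (fst b) (unitv i), vadd (snd b) (unitv i)))"

definition tequiv :: "nat \<Rightarrow> expv set \<Rightarrow> expv \<times> expv \<Rightarrow> expv \<times> expv \<Rightarrow> bool" where
  "tequiv r \<beta> a b \<longleftrightarrow> a \<in> arrows r \<beta> \<and> (tstep r \<beta>)\<^sup>*\<^sup>* a b"

definition sim0 :: "nat \<Rightarrow> expv set \<Rightarrow> expv \<times> expv \<Rightarrow> bool" where
  "sim0 r \<beta> c \<longleftrightarrow> (\<exists>d' j'. tequiv r \<beta> c (d', j') \<and>
      (\<exists>i<r. j' i = 0 \<and> d' i \<ge> 1 \<and> vsub d' (unitv i) \<notin> \<beta>))"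

text \<open>Polynomial ring P over k in variables indexed by pairs of exponent vectors
  (only arrows will survive in R).\<close>
type_synonym 'k cpoly = "((expv \<times> expv) \<Rightarrow>\<^sub>0 nat) \<Rightarrow>\<^sub>0 'k"

definition cvar :: "expv \<times> expv \<Rightarrow> 'k::comm_ring_1 cpoly" where
  "cvar v = Poly_Mapping.single (Poly_Mapping.single v 1) 1"

definition cconst :: "'k::comm_ring_1 \<Rightarrow> 'k cpoly" where
  "cconst c = Poly_Mapping.single 0 c"

definition ideal_gen :: "'a::comm_ring_1 set \<Rightarrow> 'a set" where
  "ideal_gen G = {\<Sum>i\<in>F. f i * i | F f. finite F \<and> F \<subseteq> G}"

definition cC :: "expv set \<Rightarrow> expv \<Rightarrow> expv \<Rightarrow> 'k::comm_ring_1 cpoly" where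
  "cC \<beta> m l = (if m \<in> \<beta> then (if m = l then 1 else 0) else cvar (m, l))"

text \<open>Relations defining U_beta: the span of x^d - sum_j c^d_j x^j is stable under
  multiplication by each x_i; non-arrow variables are killed.\<close>
definition hilb_rels :: "nat \<Rightarrow> expv set \<Rightarrow> 'k::comm_ring_1 cpoly set" where
  "hilb_rels r \<beta> =
     {cvar (vadd d (unitv i), l) - (\<Sum>j\<in>\<beta>. cvar (d, j) * cC \<beta> (vadd j (unitv i)) l)
        | d i l. d \<in> monoms r \<and> d \<notin> \<beta> \<and> i < r \<and> l \<in> \<beta>}
     \<union> {cvar v | v. v \<notin> arrows r \<beta>}"

text \<open>R = P / J with J the ideal generated by the relations.\<close>
definition hilb_ideal :: "nat \<Rightarrow> expv set \<Rightarrow> 'k::comm_ring_1 cpoly set" where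
  "hilb_ideal r \<beta> = ideal_gen (hilb_rels r \<beta>)"

text \<open>Ideal of t_beta in P (all arrow coordinates vanish); its image in R is M.\<close>
definition pt_ideal :: "nat \<Rightarrow> expv set \<Rightarrow> 'k::comm_ring_1 cpoly set" where
  "pt_ideal r \<beta> = ideal_gen (cvar ` arrows r \<beta>)"

text \<open>Preimage in P of M^2 subset R: J + m^2.\<close>
definition Msq_preimage :: "nat \<Rightarrow> expv set \<Rightarrow> 'k::comm_ring_1 cpoly set" where
  "Msq_preimage r \<beta> =
     ideal_gen (hilb_rels r \<beta> \<union> {p * q | p q. p \<in> pt_ideal r \<beta> \<and> q \<in> pt_ideal r \<beta>})"

text \<open>The images of the arrows in S in M/M^2 span a k-subspace of dimension |S|, i.e.
  they are k-linearly independent (as a family indexed by S) in M/M^2 = (m+J)/(m^2+J).\<close>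
definition cotangent_indep :: "'k::field itself \<Rightarrow> nat \<Rightarrow> expv set \<Rightarrow> (expv \<times> expv) set \<Rightarrow> bool" where
  "cotangent_indep _ r \<beta> S \<longleftrightarrow>
     (\<forall>coef::expv \<times> expv \<Rightarrow> 'k.
        (\<Sum>a\<in>S. cconst (coef a) * cvar a) \<in> Msq_preimage r \<beta> \<longrightarrow> (\<forall>a\<in>S. coef a = 0))"

end

theory Submission
  imports Defs
begin

declare One_nat_def [simp del]

abbreviation lk where "lk \<equiv> Poly_Mapping.lookup"
abbreviation sg where "sg \<equiv> Poly_Mapping.single"

lemma single1_decomp:
  fixes l q :: "'a \<Rightarrow>\<^sub>0 nat"
  assumes "sg v 1 = l + q"
  shows "(l = 0 \<and> q = sg v 1) \<or> (l = sg v 1 \<and> q = 0)"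
proof -
  have h: "\<And>x. lk l x + lk q x = (1 when v = x)"
    using assms by (metis lookup_add lookup_single)
  have "lk l v + lk q v = 1" using h[of v] by simp
  then have "(lk l v = 0 \<and> lk q v = 1) \<or> (lk l v = 1 \<and> lk q v = 0)" by arith
  then show ?thesis
  proof
    assume a: "lk l v = 0 \<and> lk q v = 1"
    have "l = 0" by (rule poly_mapping_eqI) (metis a h add_eq_0_iff_both_eq_0 lookup_zero when_simps(2))
    moreover have "q = sg v 1" using assms \<open>l = 0\<close> by simp
    ultimately show ?thesis by simp
  next
    assume a: "lk l v = 1 \<and> lk q v = 0"
    have "q = 0" by (rule poly_mapping_eqI) (metis a h add_eq_0_iff_both_eq_0 lookup_zero when_simps(2))
    moreover have "l = sg v 1" using assms \<open>q = 0\<close> by simp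
    ultimately show ?thesis by simp
  qed
qed

lemma pm_sum_zero:
  fixes l q :: "'a \<Rightarrow>\<^sub>0 nat"
  assumes "0 = l + q" shows "l = 0"
proof (rule poly_mapping_eqI)
  fix x
  have "lk l x + lk q x = 0"
    using assms by (metis lookup_add lookup_zero)
  then show "lk l x = lk 0 x" by simp
qed

lemma lookup_mult_zero:
  fixes f g :: "('a \<Rightarrow>\<^sub>0 nat) \<Rightarrow>\<^sub>0 'b::comm_ring_1"
  shows "lk (f * g) 0 = lk f 0 * lk g 0"
proof -
  have inner: "\<And>l. (\<Sum>q. lk g q when 0 = l + q) = (if l = 0 then lk g 0 else 0)"
  proof -
    fix l :: "'a \<Rightarrow>\<^sub>0 nat"
    show "(\<Sum>q. lk g q when 0 = l + q) = (if l = 0 then lk g 0 else 0)"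
    proof (cases "l = 0")
      case True then show ?thesis by (simp add: when_def)
    next
      case False
      then have "\<And>q. 0 \<noteq> l + q" using pm_sum_zero by blast
      then show ?thesis using False by (simp add: when_def)
    qed
  qed
  have "lk (f * g) 0 = (\<Sum>l. lk f l * (if l = 0 then lk g 0 else 0))"
    by (simp only: lookup_mult inner)
  also have "\<dots> = (\<Sum>l::'a \<Rightarrow>\<^sub>0 nat. if l = 0 then lk f 0 * lk g 0 else 0)"
  proof -
    have e: "(\<lambda>l. lk f l * (if l = 0 then lk g 0 else 0)) = (\<lambda>l::'a \<Rightarrow>\<^sub>0 nat. if l = 0 then lk f 0 * lk g 0 else 0)"
      by (auto simp: fun_eq_iff)
    show ?thesis by (simp only: e)
  qed
  also have "\<dots> = lk f 0 * lk g 0" by simp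
  finally show ?thesis .
qed

lemma lookup_mult_single1:
  fixes f g :: "('a \<Rightarrow>\<^sub>0 nat) \<Rightarrow>\<^sub>0 'b::comm_ring_1"
  fixes v :: 'a
  defines "k \<equiv> sg v 1"
  shows "lk (f * g) k = lk f 0 * lk g k + lk f k * lk g 0"
proof -
  have k0: "k \<noteq> 0" unfolding k_def by (metis lookup_single_eq lookup_zero zero_neq_one)
  have inner: "\<And>l. (\<Sum>q. lk g q when k = l + q) = (if l = 0 then lk g k else if l = k then lk g 0 else 0)"
  proof -
    fix l
    show "(\<Sum>q. lk g q when k = l + q) = (if l = 0 then lk g k else if l = k then lk g 0 else 0)"
    proof (cases "l = 0")
      case True then show ?thesis by (simp add: when_def)
    next
      case False
      show ?thesis
      proof (cases "l = k")
        case True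
        have "\<And>q. (k = l + q) = (q = 0)" using True by (metis add.right_neutral add_left_cancel)
        then show ?thesis using True False by (simp add: when_def)
      next
        case F2: False
        have "\<And>q. k \<noteq> l + q" using single1_decomp False F2 unfolding k_def by metis
        then show ?thesis using False F2 by (simp add: when_def)
      qed
    qed
  qed
  have "lk (f * g) k = (\<Sum>l. lk f l * (if l = 0 then lk g k else if l = k then lk g 0 else 0))"
    by (simp only: lookup_mult inner)
  also have "\<dots> = (\<Sum>l\<in>{0,k}. lk f l * (if l = 0 then lk g k else if l = k then lk g 0 else 0))"
    by (rule Sum_any.expand_superset) auto
  also have "\<dots> = lk f 0 * lk g k + lk f k * lk g 0"
    using k0 by simp
  finally show ?thesis .
qed

interpretation rmod: module "(*) :: 'a::comm_ring_1 \<Rightarrow> 'a \<Rightarrow> 'a"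
  by standard (auto simp: algebra_simps)

lemma ideal_gen_span: "ideal_gen G = rmod.span G"
  unfolding ideal_gen_def rmod.span_explicit by blast

lemma ideal_gen_base: "x \<in> G \<Longrightarrow> x \<in> ideal_gen G"
  by (simp add: ideal_gen_span rmod.span_base)

lemma ideal_gen_zero: "0 \<in> ideal_gen G"
  by (simp add: ideal_gen_span rmod.span_zero)

lemma ideal_gen_add: "x \<in> ideal_gen G \<Longrightarrow> y \<in> ideal_gen G \<Longrightarrow> x + y \<in> ideal_gen G"
  by (simp add: ideal_gen_span rmod.span_add)

lemma ideal_gen_diff: "x \<in> ideal_gen G \<Longrightarrow> y \<in> ideal_gen G \<Longrightarrow> x - y \<in> ideal_gen G"
  by (simp add: ideal_gen_span rmod.span_diff)

lemma ideal_gen_mult: "x \<in> ideal_gen G \<Longrightarrow> c * x \<in> ideal_gen G"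
  by (simp add: ideal_gen_span rmod.span_scale)

lemma ideal_gen_sum: "(\<And>x. x \<in> A \<Longrightarrow> f x \<in> ideal_gen G) \<Longrightarrow> sum f A \<in> ideal_gen G"
  by (simp add: ideal_gen_span rmod.span_sum)

lemma vadd_monoms: "d \<in> monoms r \<Longrightarrow> i < r \<Longrightarrow> vadd d (unitv i) \<in> monoms r"
  by (auto simp: monoms_def vadd_def unitv_def)

lemma vsub_monoms: "d \<in> monoms r \<Longrightarrow> vsub d (unitv i) \<in> monoms r"
  by (auto simp: monoms_def vsub_def unitv_def)

lemma vadd_vsub: "1 \<le> l i \<Longrightarrow> vadd (vsub l (unitv i)) (unitv i) = l"
  by (auto simp: fun_eq_iff vadd_def vsub_def unitv_def)

lemma vsub_vadd: "vsub (vadd d (unitv i)) (unitv i) = d"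
  by (auto simp: fun_eq_iff vadd_def vsub_def unitv_def)

lemma vadd_eq_iff: "(vadd j (unitv i) = l) = (1 \<le> l i \<and> j = vsub l (unitv i))"
proof
  assume "vadd j (unitv i) = l"
  then show "1 \<le> l i \<and> j = vsub l (unitv i)"
    by (metis vsub_vadd le_add2 unitv_def vadd_def)
next
  assume "1 \<le> l i \<and> j = vsub l (unitv i)"
  then show "vadd j (unitv i) = l" using vadd_vsub by blast
qed

lemma bs_monoms: "basis_set r \<beta> \<Longrightarrow> j \<in> \<beta> \<Longrightarrow> j \<in> monoms r"
  by (auto simp: basis_set_def)

lemma bs_vsub: "basis_set r \<beta> \<Longrightarrow> l \<in> \<beta> \<Longrightarrow> vsub l (unitv i) \<in> \<beta>"
  unfolding basis_set_def
  by (metis (no_types, lifting) diff_le_self mdvd_def subsetD vsub_def vsub_monoms)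

lemma bs_vadd_notin: "basis_set r \<beta> \<Longrightarrow> d \<in> monoms r \<Longrightarrow> d \<notin> \<beta> \<Longrightarrow> vadd d (unitv i) \<notin> \<beta>"
  unfolding basis_set_def
  by (metis (no_types, lifting) le_add1 mdvd_def vadd_def)

lemma rel_decomp:
  assumes bs: "basis_set r \<beta>" and l: "l \<in> \<beta>"
  shows "(\<Sum>j\<in>\<beta>. cvar (d, j) * cC \<beta> (vadd j (unitv i)) l :: 'k::comm_ring_1 cpoly) =
     (if 1 \<le> l i then cvar (d, vsub l (unitv i)) else 0) +
     (\<Sum>j\<in>\<beta>. if vadd j (unitv i) \<in> \<beta> then 0 else cvar (d, j) * cvar (vadd j (unitv i), l))"
proof -
  have t: "\<And>j. (cvar (d, j) * cC \<beta> (vadd j (unitv i)) l :: 'k cpoly) =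
     (if vadd j (unitv i) = l then cvar (d, j) else 0) +
     (if vadd j (unitv i) \<in> \<beta> then 0 else cvar (d, j) * cvar (vadd j (unitv i), l))"
    using l by (auto simp: cC_def)
  have s: "(\<Sum>j\<in>\<beta>. (if vadd j (unitv i) = l then cvar (d, j) else 0) :: 'k cpoly)
     = (if 1 \<le> l i then cvar (d, vsub l (unitv i)) else 0)"
  proof (cases "1 \<le> l i")
    case True
    have "(\<Sum>j\<in>\<beta>. (if vadd j (unitv i) = l then cvar (d, j) else 0) :: 'k cpoly)
       = (\<Sum>j\<in>\<beta>. (if j = vsub l (unitv i) then cvar (d, j) else 0))"
      using True by (intro sum.cong) (auto simp: vadd_eq_iff)
    also have "\<dots> = cvar (d, vsub l (unitv i))"
      using bs_vsub[OF bs l] bs by (simp add: basis_set_def)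
    finally show ?thesis using True by simp
  next
    case False
    then show ?thesis by (simp add: vadd_eq_iff)
  qed
  show ?thesis unfolding t sum.distrib s ..
qed

lemma T_cases:
  assumes bs: "basis_set r \<beta>" and d: "d \<in> monoms r" "d \<notin> \<beta>" and i: "i < r" and l: "l \<in> \<beta>" and j: "j \<in> \<beta>"
  shows "(if vadd j (unitv i) \<in> \<beta> then 0 else cvar (d, j) * cvar (vadd j (unitv i), l)) = 0 \<or>
    (\<exists>x y. x \<in> arrows r \<beta> \<and> y \<in> arrows r \<beta> \<and>
      (if vadd j (unitv i) \<in> \<beta> then 0 else cvar (d, j) * cvar (vadd j (unitv i), l)) = cvar x * cvar y)"
proof (cases "vadd j (unitv i) \<in> \<beta>")
  case True then show ?thesis by simp
next
  case False
  have "(d, j) \<in> arrows r \<beta>" using d j by (simp add: arrows_def)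
  moreover have "(vadd j (unitv i), l) \<in> arrows r \<beta>"
    using False l vadd_monoms[OF bs_monoms[OF bs j] i] by (simp add: arrows_def)
  ultimately show ?thesis using False by auto
qed

section \<open>Part A: membership in the preimage of M^2\<close>

lemma pt_ideal_cvar: "a \<in> arrows r \<beta> \<Longrightarrow> cvar a \<in> pt_ideal r \<beta>"
  unfolding pt_ideal_def by (rule ideal_gen_base) simp

lemma msq_prod:
  assumes x: "x \<in> arrows r \<beta>" and y: "y \<in> arrows r \<beta>"
  shows "cvar x * cvar y \<in> Msq_preimage r \<beta>"
  unfolding Msq_preimage_def
  by (intro ideal_gen_base UnI2 CollectI exI[of _ "cvar x"] exI[of _ "cvar y"] conjI refl pt_ideal_cvar x y)

lemma msq_rel: "g \<in> hilb_rels r \<beta> \<Longrightarrow> g \<in> Msq_preimage r \<beta>"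
  unfolding Msq_preimage_def by (intro ideal_gen_base UnI1)

lemma rel_in: "d \<in> monoms r \<Longrightarrow> d \<notin> \<beta> \<Longrightarrow> i < r \<Longrightarrow> l \<in> \<beta> \<Longrightarrow>
  cvar (vadd d (unitv i), l) - (\<Sum>j\<in>\<beta>. cvar (d, j) * cC \<beta> (vadd j (unitv i)) l) \<in> hilb_rels r \<beta>"
  unfolding hilb_rels_def
  by (intro UnI1 CollectI exI[of _ d] exI[of _ i] exI[of _ l]) simp

lemma msq_neg: "x \<in> Msq_preimage r \<beta> \<Longrightarrow> - x \<in> Msq_preimage r \<beta>"
proof -
  assume "x \<in> Msq_preimage r \<beta>"
  then have "(-1) * x \<in> Msq_preimage r \<beta>" unfolding Msq_preimage_def by (rule ideal_gen_mult)
  then show "- x \<in> Msq_preimage r \<beta>" by simp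
qed

lemma msq_add: "x \<in> Msq_preimage r \<beta> \<Longrightarrow> y \<in> Msq_preimage r \<beta> \<Longrightarrow> x + y \<in> Msq_preimage r \<beta>"
  unfolding Msq_preimage_def by (rule ideal_gen_add)

lemma msq_zero: "0 \<in> Msq_preimage r \<beta>"
  unfolding Msq_preimage_def by (rule ideal_gen_zero)

lemma msq_step:
  assumes bs: "basis_set r \<beta>" and d: "d \<in> monoms r" "d \<notin> \<beta>" and i: "i < r" and l: "l \<in> \<beta>"
  shows "(cvar (vadd d (unitv i), l) - (if 1 \<le> l i then cvar (d, vsub l (unitv i)) else 0) :: 'k::comm_ring_1 cpoly)
     \<in> Msq_preimage r \<beta>"
proof -
  let ?T = "\<lambda>j. (if vadd j (unitv i) \<in> \<beta> then 0 else cvar (d, j) * cvar (vadd j (unitv i), l) :: 'k cpoly)"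
  have g: "cvar (vadd d (unitv i), l) - (\<Sum>j\<in>\<beta>. cvar (d, j) * cC \<beta> (vadd j (unitv i)) l) \<in> Msq_preimage r \<beta>"
    by (rule msq_rel, rule rel_in[OF d i l])
  have Tj: "?T j \<in> Msq_preimage r \<beta>" if j: "j \<in> \<beta>" for j
  proof -
    from T_cases[OF bs d i l j]
    consider (z) "?T j = 0" | (p) x y where "x \<in> arrows r \<beta>" "y \<in> arrows r \<beta>" "?T j = cvar x * cvar y"
      by blast
    then show ?thesis
    proof cases
      case z show ?thesis unfolding z by (rule msq_zero)
    next
      case p show ?thesis unfolding p(3) by (rule msq_prod[OF p(1,2)])
    qed
  qed
  have T: "sum ?T \<beta> \<in> Msq_preimage r \<beta>"
    using Tj unfolding Msq_preimage_def by (intro ideal_gen_sum) auto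
  have "(cvar (vadd d (unitv i), l) - (if 1 \<le> l i then cvar (d, vsub l (unitv i)) else 0) :: 'k cpoly)
     = (cvar (vadd d (unitv i), l) - (\<Sum>j\<in>\<beta>. cvar (d, j) * cC \<beta> (vadd j (unitv i)) l)) + sum ?T \<beta>"
    unfolding rel_decomp[OF bs l] by (simp add: algebra_simps)
  then show ?thesis using msq_add[OF g T] by (simp only:)
qed

lemma tstep_unfold:
  assumes "tstep r \<beta> a b"
  shows "\<exists>i<r. \<exists>d j. d \<in> monoms r \<and> d \<notin> \<beta> \<and> j \<in> \<beta> \<and> vadd j (unitv i) \<in> \<beta> \<and>
     ((a = (d, j) \<and> b = (vadd d (unitv i), vadd j (unitv i))) \<or> (b = (d, j) \<and> a = (vadd d (unitv i), vadd j (unitv i))))"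
proof -
  have ab: "a \<in> arrows r \<beta>" "b \<in> arrows r \<beta>" using assms by (simp_all add: tstep_def)
  obtain i where i: "i < r" and c: "b = (vadd (fst a) (unitv i), vadd (snd a) (unitv i)) \<or> a = (vadd (fst b) (unitv i), vadd (snd b) (unitv i))"
    using assms unfolding tstep_def by blast
  from c show ?thesis
  proof
    assume b: "b = (vadd (fst a) (unitv i), vadd (snd a) (unitv i))"
    have "fst a \<in> monoms r" "fst a \<notin> \<beta>" "snd a \<in> \<beta>" "vadd (snd a) (unitv i) \<in> \<beta>"
      using ab b by (auto simp: arrows_def split: prod.splits)
    then show ?thesis using i b by (intro exI[of _ i] conjI exI[of _ "fst a"] exI[of _ "snd a"]) auto
  next
    assume a: "a = (vadd (fst b) (unitv i), vadd (snd b) (unitv i))"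
    have "fst b \<in> monoms r" "fst b \<notin> \<beta>" "snd b \<in> \<beta>" "vadd (snd b) (unitv i) \<in> \<beta>"
      using ab a by (auto simp: arrows_def split: prod.splits)
    then show ?thesis using i a by (intro exI[of _ i] conjI exI[of _ "fst b"] exI[of _ "snd b"]) auto
  qed
qed

lemma msq_tstep:
  assumes bs: "basis_set r \<beta>" and st: "tstep r \<beta> a b"
  shows "(cvar a - cvar b :: 'k::comm_ring_1 cpoly) \<in> Msq_preimage r \<beta>"
proof -
  obtain i d j where i: "i < r" and dj: "d \<in> monoms r" "d \<notin> \<beta>" "j \<in> \<beta>" "vadd j (unitv i) \<in> \<beta>"
    and c: "(a = (d, j) \<and> b = (vadd d (unitv i), vadd j (unitv i))) \<or> (b = (d, j) \<and> a = (vadd d (unitv i), vadd j (unitv i)))"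
    using tstep_unfold[OF st] by blast
  have li: "1 \<le> vadd j (unitv i) i" by (simp add: vadd_def unitv_def)
  have m: "(cvar (vadd d (unitv i), vadd j (unitv i)) - cvar (d, j) :: 'k cpoly) \<in> Msq_preimage r \<beta>"
    using msq_step[OF bs dj(1,2) i dj(4), where 'k='k] li by (simp add: vsub_vadd)
  from c show ?thesis
  proof
    assume "a = (d, j) \<and> b = (vadd d (unitv i), vadd j (unitv i))"
    then show ?thesis using msq_neg[OF m] by simp
  next
    assume "b = (d, j) \<and> a = (vadd d (unitv i), vadd j (unitv i))"
    then show ?thesis using m by simp
  qed
qed

lemma msq_rtrancl:
  assumes bs: "basis_set r \<beta>" and st: "(tstep r \<beta>)\<^sup>*\<^sup>* a b"
  shows "(cvar a - cvar b :: 'k::comm_ring_1 cpoly) \<in> Msq_preimage r \<beta>"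
  using st
proof (induction rule: rtranclp_induct)
  case base then show ?case by (simp add: msq_zero)
next
  case (step y z)
  have "(cvar a - cvar z :: 'k cpoly) = (cvar a - cvar y) + (cvar y - cvar z)" by simp
  then show ?case using step.IH msq_tstep[OF bs step.hyps(2), where 'k='k] msq_add by metis
qed

lemma tstep_arrows: "tstep r \<beta> a b \<Longrightarrow> a \<in> arrows r \<beta> \<and> b \<in> arrows r \<beta>"
  by (simp add: tstep_def)

lemma tequiv_arrow: "tequiv r \<beta> a b \<Longrightarrow> b \<in> arrows r \<beta>"
  unfolding tequiv_def
proof (elim conjE)
  assume a: "a \<in> arrows r \<beta>" and "(tstep r \<beta>)\<^sup>*\<^sup>* a b"
  from this(2) show "b \<in> arrows r \<beta>"
    by (induction rule: rtranclp_induct) (auto simp: a dest: tstep_arrows)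
qed

lemma msq_sim0:
  assumes bs: "basis_set r \<beta>" and s: "sim0 r \<beta> c"
  shows "(cvar c :: 'k::comm_ring_1 cpoly) \<in> Msq_preimage r \<beta>"
proof -
  obtain d' j' i where te: "tequiv r \<beta> c (d', j')" and i: "i < r" and c: "j' i = 0" "1 \<le> d' i"
    "vsub d' (unitv i) \<notin> \<beta>"
    using s unfolding sim0_def by blast
  have ar: "(d', j') \<in> arrows r \<beta>" using tequiv_arrow[OF te] .
  let ?d = "vsub d' (unitv i)"
  have dm: "?d \<in> monoms r" using ar by (simp add: arrows_def vsub_monoms)
  have j': "j' \<in> \<beta>" using ar by (simp add: arrows_def)
  have "(cvar (vadd ?d (unitv i), j') :: 'k cpoly) \<in> Msq_preimage r \<beta>"
    using msq_step[OF bs dm c(3) i j', where 'k='k] c(1) by simp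
  then have m1: "(cvar (d', j') :: 'k cpoly) \<in> Msq_preimage r \<beta>" using vadd_vsub[of d' i, OF c(2)] by simp
  have m2: "(cvar c - cvar (d', j') :: 'k cpoly) \<in> Msq_preimage r \<beta>"
    using msq_rtrancl[OF bs] te unfolding tequiv_def by blast
  have "(cvar c :: 'k cpoly) = (cvar c - cvar (d', j')) + cvar (d', j')" by simp
  then show ?thesis using m1 m2 msq_add by metis
qed

section \<open>Part B: a linear functional vanishing on the preimage of M^2\<close>

definition Zs :: "(expv \<times> expv) set \<Rightarrow> 'k::comm_ring_1 cpoly set" where
  "Zs C = {p. lk p 0 = 0 \<and> (\<Sum>b\<in>C. lk p (sg b 1)) = 0}"

lemma Zs_mult:
  assumes "g \<in> Zs C" shows "f * g \<in> Zs C"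
proof -
  have g: "lk g 0 = 0" "(\<Sum>b\<in>C. lk g (sg b 1)) = 0" using assms by (auto simp: Zs_def)
  have "\<And>b. lk (f * g) (sg b 1) = lk f 0 * lk g (sg b 1)"
    using g(1) by (simp add: lookup_mult_single1)
  then have "(\<Sum>b\<in>C. lk (f * g) (sg b 1)) = (\<Sum>b\<in>C. lk f 0 * lk g (sg b 1))"
    by simp
  also have "\<dots> = 0" by (simp add: sum_distrib_left[symmetric] g(2))
  finally show ?thesis by (simp add: Zs_def lookup_mult_zero g(1))
qed

lemma Zs_add: "x \<in> Zs C \<Longrightarrow> y \<in> Zs C \<Longrightarrow> x + y \<in> Zs C"
  by (simp add: Zs_def lookup_add sum.distrib)

lemma Zs_diff: "x \<in> Zs C \<Longrightarrow> y \<in> Zs C \<Longrightarrow> x - y \<in> Zs C"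
  by (simp add: Zs_def lookup_minus sum_subtractf)

lemma Zs_zero: "0 \<in> Zs C"
  by (simp add: Zs_def)

lemma Zs_sum: "(\<And>x. x \<in> A \<Longrightarrow> f x \<in> Zs C) \<Longrightarrow> sum f A \<in> Zs C"
  by (induction A rule: infinite_finite_induct) (auto simp: Zs_zero Zs_add)

lemma Zs_ideal: "G \<subseteq> Zs C \<Longrightarrow> ideal_gen G \<subseteq> Zs C"
  unfolding ideal_gen_def by (auto intro!: Zs_sum Zs_mult)

lemma const0_ideal: "(\<And>g. g \<in> G \<Longrightarrow> lk g 0 = 0) \<Longrightarrow> p \<in> ideal_gen G \<Longrightarrow> lk (p :: 'k::comm_ring_1 cpoly) 0 = 0"
  unfolding ideal_gen_def by (fastforce simp: lookup_sum lookup_mult_zero intro!: sum.neutral)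

lemma lk_cvar0: "lk (cvar v :: 'k::comm_ring_1 cpoly) 0 = 0"
proof -
  have "sg v 1 \<noteq> (0 :: (expv \<times> expv) \<Rightarrow>\<^sub>0 nat)" by (metis lookup_single_eq lookup_zero zero_neq_one)
  then show ?thesis by (simp add: cvar_def lookup_single)
qed

lemma sg_inj: "(sg a (1::nat) = sg b 1) = (a = b)"
proof
  assume h: "sg a (1::nat) = sg b 1"
  show "a = b"
  proof (rule ccontr)
    assume "a \<noteq> b"
    then have "lk (sg b (1::nat)) a = 0" by (intro lookup_single_not_eq) (rule not_sym)
    moreover have "lk (sg a (1::nat)) a = 1" by (rule lookup_single_eq)
    ultimately show False using h by simp
  qed
qed simp

lemma lk_cvar1: "lk (cvar v :: 'k::comm_ring_1 cpoly) (sg b 1) = (if v = b then 1 else 0)"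
proof (cases "v = b")
  case True then show ?thesis by (simp add: cvar_def)
next
  case False
  then have "sg v (1::nat) \<noteq> sg b 1" by (simp add: sg_inj)
  then show ?thesis using False unfolding cvar_def by (simp add: lookup_single_not_eq)
qed

lemma prod_Zs:
  assumes "lk p 0 = 0" "lk q 0 = 0"
  shows "(p * q :: 'k::comm_ring_1 cpoly) \<in> Zs C"
proof -
  have "\<And>b. lk (p * q) (sg b 1) = 0" using assms by (simp add: lookup_mult_single1)
  then show ?thesis using assms by (simp add: Zs_def lookup_mult_zero)
qed

lemma pt_ideal_const0: "p \<in> pt_ideal r \<beta> \<Longrightarrow> lk (p :: 'k::comm_ring_1 cpoly) 0 = 0"
  unfolding pt_ideal_def by (rule const0_ideal) (auto simp: lk_cvar0)

lemma sum_if_in: "finite C \<Longrightarrow> (\<Sum>b\<in>C. (if v = b then c else 0)) = (if v \<in> C then c else 0)"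
  by (simp add: sum.delta)

lemma rel_Zs:
  assumes bs: "basis_set r \<beta>" and d: "d \<in> monoms r" "d \<notin> \<beta>" and i: "i < r" and l: "l \<in> \<beta>"
    and fin: "finite C"
    and H1: "1 \<le> l i \<Longrightarrow> ((vadd d (unitv i), l) \<in> C \<longleftrightarrow> (d, vsub l (unitv i)) \<in> C)"
    and H0: "l i = 0 \<Longrightarrow> (vadd d (unitv i), l) \<notin> C"
  shows "(cvar (vadd d (unitv i), l) - (\<Sum>j\<in>\<beta>. cvar (d, j) * cC \<beta> (vadd j (unitv i)) l) :: 'k::comm_ring_1 cpoly) \<in> Zs C"
proof -
  let ?T = "\<lambda>j. (if vadd j (unitv i) \<in> \<beta> then 0 else cvar (d, j) * cvar (vadd j (unitv i), l) :: 'k cpoly)"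
  let ?E = "(if 1 \<le> l i then cvar (d, vsub l (unitv i)) else 0) :: 'k cpoly"
  have T: "sum ?T \<beta> \<in> Zs C"
  proof (rule Zs_sum)
    fix j assume j: "j \<in> \<beta>"
    from T_cases[OF bs d i l j]
    consider (z) "?T j = 0" | (p) x y where "?T j = cvar x * cvar y"
      by blast
    then show "?T j \<in> Zs C"
    proof cases
      case z show ?thesis unfolding z by (rule Zs_zero)
    next
      case p show ?thesis unfolding p by (rule prod_Zs[OF lk_cvar0 lk_cvar0])
    qed
  qed
  let ?x = "(vadd d (unitv i), l)" and ?y = "(d, vsub l (unitv i))"
  have E: "cvar ?x - ?E \<in> Zs C"
  proof (cases "1 \<le> l i")
    case True
    have e: "cvar ?x - ?E = cvar ?x - cvar ?y" using True by simp
    have "\<And>b. lk (cvar ?x - cvar ?y :: 'k cpoly) (sg b 1) = (if ?x = b then 1 else 0) - (if ?y = b then 1 else 0)"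
      by (simp only: lookup_minus lk_cvar1)
    then have "(\<Sum>b\<in>C. lk (cvar ?x - cvar ?y :: 'k cpoly) (sg b 1)) =
       (\<Sum>b\<in>C. (if ?x = b then 1 else 0)) - (\<Sum>b\<in>C. (if ?y = b then 1 else 0))"
      by (simp only: sum_subtractf)
    also have "\<dots> = (if ?x \<in> C then 1 else 0) - (if ?y \<in> C then 1 else 0)"
      by (simp only: sum_if_in[OF fin])
    also have "\<dots> = 0" using H1[OF True] by simp
    finally have s0: "(\<Sum>b\<in>C. lk (cvar ?x - cvar ?y :: 'k cpoly) (sg b 1)) = 0" .
    have z0: "lk (cvar ?x - cvar ?y :: 'k cpoly) 0 = 0" by (simp only: lookup_minus lk_cvar0) simp
    show ?thesis unfolding e Zs_def using s0 z0 by blast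
  next
    case False
    have e: "cvar ?x - ?E = cvar ?x" using False by simp
    have "l i = 0" using False by simp
    then have nx: "?x \<notin> C" by (rule H0)
    have "(\<Sum>b\<in>C. lk (cvar ?x :: 'k cpoly) (sg b 1)) = (\<Sum>b\<in>C. (if ?x = b then 1 else 0))"
      by (simp only: lk_cvar1)
    also have "\<dots> = 0" using nx by (simp only: sum_if_in[OF fin]) simp
    finally have s0: "(\<Sum>b\<in>C. lk (cvar ?x :: 'k cpoly) (sg b 1)) = 0" .
    show ?thesis unfolding e Zs_def using s0 lk_cvar0 by blast
  qed
  have eq: "(cvar (vadd d (unitv i), l) - (\<Sum>j\<in>\<beta>. cvar (d, j) * cC \<beta> (vadd j (unitv i)) l) :: 'k cpoly)
     = (cvar ?x - ?E) - sum ?T \<beta>"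
    unfolding rel_decomp[OF bs l] by (simp add: algebra_simps)
  show ?thesis unfolding eq by (rule Zs_diff[OF E T])
qed

section \<open>Translation classes\<close>

lemma tstep_sym: "tstep r \<beta> a b \<Longrightarrow> tstep r \<beta> b a"
  unfolding tstep_def by blast

lemma tequiv_step: "tequiv r \<beta> a b \<Longrightarrow> tstep r \<beta> b c \<Longrightarrow> tequiv r \<beta> a c"
  unfolding tequiv_def by auto

lemma tequiv_step_back: "tequiv r \<beta> a c \<Longrightarrow> tstep r \<beta> b c \<Longrightarrow> tequiv r \<beta> a b"
  using tequiv_step tstep_sym by metis

lemma tequiv_refl: "a \<in> arrows r \<beta> \<Longrightarrow> tequiv r \<beta> a a"
  unfolding tequiv_def by auto

definition tkey :: "expv \<times> expv \<Rightarrow> nat \<Rightarrow> int" where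
  "tkey a = (\<lambda>x. int (fst a x) - int (snd a x))"

lemma tstep_key: "tstep r \<beta> a b \<Longrightarrow> tkey a = tkey b"
  unfolding tstep_def tkey_def by (auto simp: fun_eq_iff vadd_def)

lemma tequiv_key: "tequiv r \<beta> a b \<Longrightarrow> tkey a = tkey b"
  unfolding tequiv_def
proof (elim conjE)
  assume "(tstep r \<beta>)\<^sup>*\<^sup>* a b"
  then show "tkey a = tkey b"
    by (induction rule: rtranclp_induct) (auto dest: tstep_key)
qed

lemma class_finite:
  assumes bs: "basis_set r \<beta>"
  shows "finite {b. tequiv r \<beta> a0 b}"
proof -
  have "{b. tequiv r \<beta> a0 b} \<subseteq> (\<lambda>j. ((\<lambda>x. nat (int (j x) + tkey a0 x)), j)) ` \<beta>"
  proof
    fix b assume "b \<in> {b. tequiv r \<beta> a0 b}"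
    then have te: "tequiv r \<beta> a0 b" by simp
    obtain d j where b: "b = (d, j)" by (cases b)
    have j: "j \<in> \<beta>" using tequiv_arrow[OF te] b by (simp add: arrows_def)
    have "tkey a0 = tkey b" by (rule tequiv_key[OF te])
    then have "d = (\<lambda>x. nat (int (j x) + tkey a0 x))" by (auto simp: b tkey_def fun_eq_iff)
    then show "b \<in> (\<lambda>j. ((\<lambda>x. nat (int (j x) + tkey a0 x)), j)) ` \<beta>" using j b by blast
  qed
  moreover have "finite \<beta>" using bs by (simp add: basis_set_def)
  ultimately show ?thesis by (meson finite_imageI finite_subset)
qed

lemma lk_const_cvar: "lk (cconst c * cvar a :: 'k::comm_ring_1 cpoly) (sg b 1) = (if a = b then c else 0)"
proof -
  have e: "(cconst c * cvar a :: 'k cpoly) = sg (sg a 1) c"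
    unfolding cconst_def cvar_def by (simp add: mult_single)
  show ?thesis
  proof (cases "a = b")
    case True then show ?thesis unfolding e by simp
  next
    case False
    then have "sg a (1::nat) \<noteq> sg b 1" by (simp add: sg_inj)
    then show ?thesis using False unfolding e by (simp add: lookup_single_not_eq)
  qed
qed

lemma hilb_rels_cases:
  assumes "g \<in> hilb_rels r \<beta>"
  obtains (rel) d i l where "d \<in> monoms r" "d \<notin> \<beta>" "i < r" "l \<in> \<beta>"
      "g = cvar (vadd d (unitv i), l) - (\<Sum>j\<in>\<beta>. cvar (d, j) * cC \<beta> (vadd j (unitv i)) l)"
  | (na) v where "v \<notin> arrows r \<beta>" "g = cvar v"
  using assms unfolding hilb_rels_def by blast

theorem theorem3p2:
  fixes r :: nat and \<beta> :: "expv set" and S :: "(expv \<times> expv) set"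
  assumes "basis_set r \<beta>"
    and "finite S"
    and "S \<subseteq> arrows r \<beta>"
  shows "cotangent_indep TYPE('k::alg_closed_field) r \<beta> S \<longleftrightarrow>
           ((\<forall>c\<in>S. \<not> sim0 r \<beta> c) \<and>
            (\<forall>c1\<in>S. \<forall>c2\<in>S. c1 \<noteq> c2 \<longrightarrow> \<not> tequiv r \<beta> c1 c2))"
proof
  assume ci: "cotangent_indep TYPE('k::alg_closed_field) r \<beta> S"
  have A: "\<not> sim0 r \<beta> c" if c: "c \<in> S" for c
  proof
    assume s: "sim0 r \<beta> c"
    let ?coef = "\<lambda>a. if a = c then 1 else (0::'k)"
    have "(\<Sum>a\<in>S. cconst (?coef a) * cvar a :: 'k cpoly) = (\<Sum>a\<in>S. if a = c then cvar a else 0)"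
      by (intro sum.cong) (auto simp: cconst_def)
    also have "\<dots> = cvar c" using c assms(2) by (simp add: sum.delta')
    finally have "(\<Sum>a\<in>S. cconst (?coef a) * cvar a :: 'k cpoly) \<in> Msq_preimage r \<beta>"
      using msq_sim0[OF assms(1) s] by simp
    then have "?coef c = 0" by (rule ci[unfolded cotangent_indep_def, rule_format, OF _ c])
    then show False by simp
  qed
  have B: "\<not> tequiv r \<beta> c1 c2" if c: "c1 \<in> S" "c2 \<in> S" "c1 \<noteq> c2" for c1 c2
  proof
    assume te: "tequiv r \<beta> c1 c2"
    let ?coef = "\<lambda>a. if a = c1 then 1 else if a = c2 then -1 else (0::'k)"
    have "(\<Sum>a\<in>S. cconst (?coef a) * cvar a :: 'k cpoly) =
       (\<Sum>a\<in>S. (if a = c1 then cvar a else 0) - (if a = c2 then cvar a else 0))"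
      using c(3) by (intro sum.cong) (auto simp: cconst_def single_uminus)
    also have "\<dots> = cvar c1 - cvar c2" using c assms(2) by (simp add: sum_subtractf sum.delta')
    moreover have "(cvar c1 - cvar c2 :: 'k cpoly) \<in> Msq_preimage r \<beta>"
      using msq_rtrancl[OF assms(1), where 'k='k] te unfolding tequiv_def by blast
    ultimately have "(\<Sum>a\<in>S. cconst (?coef a) * cvar a :: 'k cpoly) \<in> Msq_preimage r \<beta>"
      by simp
    then have "?coef c1 = 0" by (rule ci[unfolded cotangent_indep_def, rule_format, OF _ c(1)])
    then show False by simp
  qed
  show "(\<forall>c\<in>S. \<not> sim0 r \<beta> c) \<and> (\<forall>c1\<in>S. \<forall>c2\<in>S. c1 \<noteq> c2 \<longrightarrow> \<not> tequiv r \<beta> c1 c2)"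
    using A B by blast
next
  assume H: "(\<forall>c\<in>S. \<not> sim0 r \<beta> c) \<and> (\<forall>c1\<in>S. \<forall>c2\<in>S. c1 \<noteq> c2 \<longrightarrow> \<not> tequiv r \<beta> c1 c2)"
  have bs: "basis_set r \<beta>" by (rule assms(1))
  show "cotangent_indep TYPE('k::alg_closed_field) r \<beta> S"
    unfolding cotangent_indep_def
  proof (intro allI impI ballI)
    fix coef :: "expv \<times> expv \<Rightarrow> 'k" and a0
    assume mem: "(\<Sum>a\<in>S. cconst (coef a) * cvar a) \<in> Msq_preimage r \<beta>" and a0: "a0 \<in> S"
    define C where "C = {b. tequiv r \<beta> a0 b}"
    have fin: "finite C" unfolding C_def by (rule class_finite[OF bs])
    have a0ar: "a0 \<in> arrows r \<beta>" using a0 assms(3) by blast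
    have ns: "\<not> sim0 r \<beta> a0" using H a0 by blast
    have SC: "a \<in> C \<longleftrightarrow> a = a0" if "a \<in> S" for a
      using H a0 that tequiv_refl[OF a0ar] unfolding C_def mem_Collect_eq by metis
    have gens: "hilb_rels r \<beta> \<union> {p * q |p q. p \<in> pt_ideal r \<beta> \<and> q \<in> pt_ideal r \<beta>} \<subseteq> (Zs C :: 'k cpoly set)"
    proof
      fix g :: "'k cpoly"
      assume g: "g \<in> hilb_rels r \<beta> \<union> {p * q |p q. p \<in> pt_ideal r \<beta> \<and> q \<in> pt_ideal r \<beta>}"
      show "g \<in> Zs C"
      proof (cases "g \<in> {p * q |p q. p \<in> pt_ideal r \<beta> \<and> q \<in> pt_ideal r \<beta>}")
        case True
        then show ?thesis using prod_Zs pt_ideal_const0 by blast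
      next
        case False
        then have "g \<in> hilb_rels r \<beta>" using g by blast
        then show ?thesis
        proof (cases rule: hilb_rels_cases)
          case (na v)
          have "v \<notin> C" using na(1) tequiv_arrow unfolding C_def by blast
          then have "(\<Sum>b\<in>C. lk g (sg b 1)) = 0" using na(2) by (auto simp: lk_cvar1 intro: sum.neutral)
          then show ?thesis using na(2) by (simp add: Zs_def lk_cvar0)
        next
          case (rel d i l)
          note d = rel(1,2) and i = rel(3) and l = rel(4)
          show ?thesis unfolding rel(5)
          proof (rule rel_Zs[OF bs d i l fin])
            assume li: "1 \<le> l i"
            have st: "tstep r \<beta> (d, vsub l (unitv i)) (vadd d (unitv i), l)"
              unfolding tstep_def arrows_def
              using d i l li bs_vsub[OF bs l] vadd_monoms[OF d(1) i] bs_vadd_notin[OF bs d]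
              by (auto simp: vadd_vsub intro!: exI[of _ i])
            show "(vadd d (unitv i), l) \<in> C \<longleftrightarrow> (d, vsub l (unitv i)) \<in> C"
              unfolding C_def using tequiv_step[OF _ st] tequiv_step_back[OF _ st] by blast
          next
            assume li: "l i = 0"
            show "(vadd d (unitv i), l) \<notin> C"
            proof
              assume "(vadd d (unitv i), l) \<in> C"
              then have "tequiv r \<beta> a0 (vadd d (unitv i), l)" unfolding C_def by simp
              moreover have "vadd d (unitv i) i \<ge> 1" by (simp add: vadd_def unitv_def)
              ultimately have "sim0 r \<beta> a0" unfolding sim0_def
                using i li d(2) vsub_vadd by metis
              then show False using ns by simp
            qed
          qed
        qed
      qed
    qed
    have "(\<Sum>a\<in>S. cconst (coef a) * cvar a) \<in> Zs C"
      using Zs_ideal[OF gens] mem unfolding Msq_preimage_def by blast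
    then have z: "(\<Sum>b\<in>C. lk (\<Sum>a\<in>S. cconst (coef a) * cvar a) (sg b 1)) = 0"
      by (simp add: Zs_def)
    have "(\<Sum>b\<in>C. lk (\<Sum>a\<in>S. cconst (coef a) * cvar a) (sg b 1))
       = (\<Sum>a\<in>S. \<Sum>b\<in>C. if a = b then coef a else 0)"
      by (simp only: lookup_sum lk_const_cvar) (rule sum.swap)
    also have "\<dots> = (\<Sum>a\<in>S. if a = a0 then coef a else 0)"
      using fin SC by (intro sum.cong) (auto simp: sum_if_in)
    also have "\<dots> = coef a0" using a0 assms(2) by (simp add: sum.delta')
    finally show "coef a0 = 0" using z by simp
  qed
qed

end
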